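(* Let $G$ be a finite simple graph on $n\ge1$ vertices. Then there is exactly one pair of nonnegative integers $(k,m)$ with $2k+m=n$ such that $G(k,m)$ lies in the same Clifford class as $G$, i.e. $\dim_{\mathbb{C}} Z(A_{G(k,m)})=\dim_{\mathbb{C}} Z(A_G)$.
   Context: All graphs are finite, with no loops and no multiple edges. For a graph $G$ with vertices numbered $1,\dots,n$, the Clifford graph algebra $A_G$ is the unital associative $\mathbb{C}$-algebra generated by $e_1,\dots,e_n$ subject to the relations $e_i^2=-1$ for all $i$; $e_ie_j=-e_je_i$ if $i\neq j$ and vertices $i,j$ are adjacent; and $e_ie_j=e_je_i$ if $i\ne j$ and vertices $i,j$ are not adjacent. $Z(A)$ denotes the center. Two graphs with the same number of vertices are in the same Clifford class if the centers of their Clifford graph algebras have the same dimension. For nonnegative integers $k,m$, $G(k,m)$ denotes the graph on $2k+m$ vertices that is the disjoint union of $k$ copies of $K_2$ (a single edge) and $m$ isolated vertices. *)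

theory Defs
  imports Complex_Main
begin

text \<open>A finite simple graph on vertices 1..n is given by a symmetric, irreflexive
adjacency relation E (its values outside {1..n} are irrelevant).\<close>

definition simple_graph :: "nat \<Rightarrow> (nat \<Rightarrow> nat \<Rightarrow> bool) \<Rightarrow> bool" where
  "simple_graph n E \<longleftrightarrow>
     (\<forall>i\<in>{1..n}. \<forall>j\<in>{1..n}. E i j \<longleftrightarrow> E j i) \<and> (\<forall>i\<in>{1..n}. \<not> E i i)"

text \<open>G(k,m): vertices 1..2k+m, edges {2i-1,2i} for i = 1..k (k disjoint copies of K2),
vertices 2k+1..2k+m isolated.\<close>

definition Gkm_edges :: "nat \<Rightarrow> nat \<Rightarrow> nat \<Rightarrow> bool" where
  "Gkm_edges k i j \<longleftrightarrow> i \<noteq> j \<and> 1 \<le> i \<and> 1 \<le> j \<and> i \<le> 2*k \<and> j \<le> 2*k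
                       \<and> (i + 1) div 2 = (j + 1) div 2"

text \<open>Elements of the free unital associative C-algebra on e_1,...,e_n: finitely supported
complex-valued functions on words over the alphabet {1..n}; multiplication is concatenation
convolution.\<close>

definition free_alg :: "nat \<Rightarrow> (nat list \<Rightarrow> complex) set" where
  "free_alg n = {p. finite {w. p w \<noteq> 0} \<and> (\<forall>w. p w \<noteq> 0 \<longrightarrow> set w \<subseteq> {1..n})}"

definition fa_add :: "(nat list \<Rightarrow> complex) \<Rightarrow> (nat list \<Rightarrow> complex) \<Rightarrow> (nat list \<Rightarrow> complex)" where
  "fa_add p q = (\<lambda>w. p w + q w)"

definition fa_sub :: "(nat list \<Rightarrow> complex) \<Rightarrow> (nat list \<Rightarrow> complex) \<Rightarrow> (nat list \<Rightarrow> complex)" where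
  "fa_sub p q = (\<lambda>w. p w - q w)"

definition fa_smult :: "complex \<Rightarrow> (nat list \<Rightarrow> complex) \<Rightarrow> (nat list \<Rightarrow> complex)" where
  "fa_smult c p = (\<lambda>w. c * p w)"

definition fa_mult :: "(nat list \<Rightarrow> complex) \<Rightarrow> (nat list \<Rightarrow> complex) \<Rightarrow> (nat list \<Rightarrow> complex)" where
  "fa_mult p q = (\<lambda>w. \<Sum>i\<le>length w. p (take i w) * q (drop i w))"

definition fa_one :: "nat list \<Rightarrow> complex" where
  "fa_one = (\<lambda>w. if w = [] then 1 else 0)"

definition fa_zero :: "nat list \<Rightarrow> complex" where
  "fa_zero = (\<lambda>w. 0)"

definition fa_gen :: "nat \<Rightarrow> nat list \<Rightarrow> complex" where
  "fa_gen i = (\<lambda>w. if w = [i] then 1 else 0)"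

definition clifford_relations :: "nat \<Rightarrow> (nat \<Rightarrow> nat \<Rightarrow> bool) \<Rightarrow> (nat list \<Rightarrow> complex) set" where
  "clifford_relations n E =
     {fa_add (fa_mult (fa_gen i) (fa_gen i)) fa_one | i. i \<in> {1..n}}
   \<union> {fa_add (fa_mult (fa_gen i) (fa_gen j)) (fa_mult (fa_gen j) (fa_gen i)) | i j.
        i \<in> {1..n} \<and> j \<in> {1..n} \<and> i \<noteq> j \<and> E i j}
   \<union> {fa_sub (fa_mult (fa_gen i) (fa_gen j)) (fa_mult (fa_gen j) (fa_gen i)) | i j.
        i \<in> {1..n} \<and> j \<in> {1..n} \<and> i \<noteq> j \<and> \<not> E i j}"

inductive_set clifford_ideal :: "nat \<Rightarrow> (nat \<Rightarrow> nat \<Rightarrow> bool) \<Rightarrow> (nat list \<Rightarrow> complex) set"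
  for n E where
  rel: "r \<in> clifford_relations n E \<Longrightarrow> r \<in> clifford_ideal n E"
| zero: "fa_zero \<in> clifford_ideal n E"
| add: "x \<in> clifford_ideal n E \<Longrightarrow> y \<in> clifford_ideal n E \<Longrightarrow> fa_add x y \<in> clifford_ideal n E"
| smult: "x \<in> clifford_ideal n E \<Longrightarrow> fa_smult c x \<in> clifford_ideal n E"
| lmult: "a \<in> free_alg n \<Longrightarrow> x \<in> clifford_ideal n E \<Longrightarrow> fa_mult a x \<in> clifford_ideal n E"
| rmult: "a \<in> free_alg n \<Longrightarrow> x \<in> clifford_ideal n E \<Longrightarrow> fa_mult x a \<in> clifford_ideal n E"

text \<open>Preimage in the free algebra of the center Z(A_G): elements commuting with
everything modulo the ideal.\<close>

definition center_preimage :: "nat \<Rightarrow> (nat \<Rightarrow> nat \<Rightarrow> bool) \<Rightarrow> (nat list \<Rightarrow> complex) set" where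
  "center_preimage n E =
     {p \<in> free_alg n. \<forall>q \<in> free_alg n. fa_sub (fa_mult p q) (fa_mult q p) \<in> clifford_ideal n E}"

definition lincomb :: "((nat list \<Rightarrow> complex) \<Rightarrow> complex) \<Rightarrow> (nat list \<Rightarrow> complex) set \<Rightarrow> (nat list \<Rightarrow> complex)" where
  "lincomb c B = (\<lambda>w. \<Sum>b\<in>B. c b * b w)"

text \<open>B (a finite subset of the center preimage) projects to a basis of Z(A_G) =
center_preimage / ideal.\<close>

definition center_basis :: "nat \<Rightarrow> (nat \<Rightarrow> nat \<Rightarrow> bool) \<Rightarrow> (nat list \<Rightarrow> complex) set \<Rightarrow> bool" where
  "center_basis n E B \<longleftrightarrow>
     finite B \<and> B \<subseteq> center_preimage n E \<and>
     (\<forall>c. lincomb c B \<in> clifford_ideal n E \<longrightarrow> (\<forall>b\<in>B. c b = 0)) \<and>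
     (\<forall>p \<in> center_preimage n E. \<exists>c. fa_sub p (lincomb c B) \<in> clifford_ideal n E)"

definition center_dim :: "nat \<Rightarrow> (nat \<Rightarrow> nat \<Rightarrow> bool) \<Rightarrow> nat" where
  "center_dim n E = (THE d. \<exists>B. center_basis n E B \<and> card B = d)"

definition same_clifford_class :: "nat \<Rightarrow> (nat \<Rightarrow> nat \<Rightarrow> bool) \<Rightarrow> (nat \<Rightarrow> nat \<Rightarrow> bool) \<Rightarrow> bool" where
  "same_clifford_class n E E' \<longleftrightarrow> center_dim n E = center_dim n E'"

end

theory Submission
  imports Defs "HOL-Library.Function_Algebras"
begin


definition pc :: "nat set \<Rightarrow> (nat \<Rightarrow> bool) \<Rightarrow> bool" where
  "pc S P = odd (card {t\<in>S. P t})"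

lemma pc_empty[simp]: "pc {} P = False" by (simp add: pc_def)

lemma pc_insert: "finite S \<Longrightarrow> x \<notin> S \<Longrightarrow> pc (insert x S) P = (P x \<noteq> pc S P)"
proof -
  assume f: "finite S" and x: "x \<notin> S"
  show ?thesis
  proof (cases "P x")
    case True
    then have "{t\<in>insert x S. P t} = insert x {t\<in>S. P t}" by auto
    then show ?thesis using f x True by (simp add: pc_def)
  next
    case False
    then have "{t\<in>insert x S. P t} = {t\<in>S. P t}" by auto
    then show ?thesis using False by (simp add: pc_def)
  qed
qed

lemma pc_cong: "(\<And>t. t \<in> S \<Longrightarrow> P t = Q t) \<Longrightarrow> pc S P = pc S Q"
  unfolding pc_def by (metis (mono_tags, lifting) Collect_cong)

lemma pc_xor: "finite S \<Longrightarrow> pc S (\<lambda>t. P t \<noteq> Q t) = (pc S P \<noteq> pc S Q)"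
  by (induction S rule: finite_induct) (auto simp: pc_insert)

lemma pc_and_const: "pc S (\<lambda>t. A \<and> Q t) = (A \<and> pc S Q)"
  unfolding pc_def by (cases A) auto

lemma pc_and_const2: "pc S (\<lambda>t. Q t \<and> A) = (A \<and> pc S Q)"
  unfolding pc_def by (cases A) auto

lemma pc_false: "(\<And>t. t \<in> S \<Longrightarrow> \<not> P t) \<Longrightarrow> pc S P = False"
  unfolding pc_def by (metis (mono_tags, lifting) card.empty empty_Collect_eq even_zero)

lemma pc_union: "finite A \<Longrightarrow> finite B \<Longrightarrow> A \<inter> B = {} \<Longrightarrow> pc (A \<union> B) P = (pc A P \<noteq> pc B P)"
  by (induction A rule: finite_induct) (auto simp: pc_insert)

definition sd :: "nat set \<Rightarrow> nat set \<Rightarrow> nat set" where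
  "sd A B = (A - B) \<union> (B - A)"

lemma pc_sd1: "finite S \<Longrightarrow> pc (sd S {j}) P = (pc S P \<noteq> P j)"
proof (cases "j \<in> S")
  case True
  assume f: "finite S"
  have "sd S {j} = S - {j}" using True by (auto simp: sd_def)
  moreover have "pc S P = (P j \<noteq> pc (S - {j}) P)"
    using pc_insert[of "S - {j}" j P] f True by (simp add: insert_absorb)
  ultimately show ?thesis by auto
next
  case False
  assume f: "finite S"
  have "sd S {j} = insert j S" using False by (auto simp: sd_def)
  then show ?thesis using pc_insert[of S j P] f False by auto
qed

definition Kset :: "nat set \<Rightarrow> (nat \<Rightarrow> nat \<Rightarrow> bool) \<Rightarrow> nat set set" where
  "Kset V E = {T. T \<subseteq> V \<and> (\<forall>i\<in>V. \<not> pc T (E i))}"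

definition symirr :: "nat set \<Rightarrow> (nat \<Rightarrow> nat \<Rightarrow> bool) \<Rightarrow> bool" where
  "symirr V E \<longleftrightarrow> (\<forall>i\<in>V. \<forall>j\<in>V. E i j = E j i) \<and> (\<forall>i\<in>V. \<not> E i i)"

definition pivot :: "(nat \<Rightarrow> nat \<Rightarrow> bool) \<Rightarrow> nat \<Rightarrow> nat \<Rightarrow> nat \<Rightarrow> nat \<Rightarrow> bool" where
  "pivot E a b x t = (E x t \<noteq> ((E x a \<and> E b t) \<noteq> (E x b \<and> E a t)))"

definition lift :: "(nat \<Rightarrow> nat \<Rightarrow> bool) \<Rightarrow> nat \<Rightarrow> nat \<Rightarrow> nat set \<Rightarrow> nat set" where
  "lift E a b T = T \<union> (if pc T (E a) then {b} else {}) \<union> (if pc T (E b) then {a} else {})"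

lemma pc_lift:
  assumes f: "finite T" and ab: "a \<notin> T" "b \<notin> T" "a \<noteq> b"
  shows "pc (lift E a b T) P = ((pc T P \<noteq> (pc T (E a) \<and> P b)) \<noteq> (pc T (E b) \<and> P a))"
proof -
  let ?B = "(if pc T (E a) then {b} else {})" and ?A = "(if pc T (E b) then {a} else {})"
  have "lift E a b T = T \<union> (?B \<union> ?A)" by (simp add: lift_def Un_assoc)
  moreover have "pc (?B \<union> ?A) P = ((pc T (E a) \<and> P b) \<noteq> (pc T (E b) \<and> P a))"
    using ab by (auto simp: pc_insert)
  moreover have "pc (T \<union> (?B \<union> ?A)) P = (pc T P \<noteq> pc (?B \<union> ?A) P)"
    using ab f by (intro pc_union) auto
  ultimately show ?thesis by auto
qed

lemma Kset_count:
  assumes "finite V" "symirr V E"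
  shows "\<exists>r. 2 * r \<le> card V \<and> card (Kset V E) = 2 ^ (card V - 2 * r)"
  using assms
proof (induction "card V" arbitrary: V E rule: less_induct)
  case less
  note fin = less.prems(1)
  have sym: "\<And>i j. i \<in> V \<Longrightarrow> j \<in> V \<Longrightarrow> E i j = E j i"
    and irr: "\<And>i. i \<in> V \<Longrightarrow> \<not> E i i" using less.prems(2) by (auto simp: symirr_def)
  show ?case
  proof (cases "\<exists>a\<in>V. \<exists>b\<in>V. E a b")
    case False
    have "Kset V E = Pow V"
      using False unfolding Kset_def by (auto; meson pc_false subsetD)
    then have "card (Kset V E) = 2 ^ card V" using fin by (simp add: card_Pow)
    then show ?thesis by (intro exI[of _ 0]) simp
  next
    case True
    then obtain a b where a: "a \<in> V" and b: "b \<in> V" and eab: "E a b" by blast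
    have ab: "a \<noteq> b" using irr a eab by auto
    define V' where "V' = V - {a, b}"
    define E' where "E' = pivot E a b"
    have cV': "card V' = card V - 2" using a b ab fin by (simp add: V'_def)
    have cV2: "2 \<le> card V"
    proof -
      have "card {a,b} \<le> card V" using a b fin by (intro card_mono) auto
      then show ?thesis using ab by simp
    qed
    have fV': "finite V'" using fin by (simp add: V'_def)
    have si': "symirr V' E'"
      unfolding symirr_def E'_def pivot_def V'_def
    proof (intro conjI ballI)
      fix i j assume "i \<in> V - {a,b}" "j \<in> V - {a,b}"
      then have "i \<in> V" "j \<in> V" by auto
      then show "(E i j \<noteq> ((E i a \<and> E b j) \<noteq> (E i b \<and> E a j))) =
            (E j i \<noteq> ((E j a \<and> E b i) \<noteq> (E j b \<and> E a i)))"
        using sym[of i j] sym[of i a] sym[of i b] sym[of j a] sym[of j b] a b by auto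
    next
      fix i assume "i \<in> V - {a,b}"
      then have "i \<in> V" by auto
      then show "\<not> (E i i \<noteq> ((E i a \<and> E b i) \<noteq> (E i b \<and> E a i)))"
        using irr[of i] sym[of i a] sym[of i b] a b by auto
    qed
    obtain r where r: "2 * r \<le> card V'" "card (Kset V' E') = 2 ^ (card V' - 2 * r)"
      using less.hyps[of V' E'] fV' si' cV' cV2 by force
    have bij: "bij_betw (lift E a b) (Kset V' E') (Kset V E)"
    proof (rule bij_betwI')
      fix X Y assume X: "X \<in> Kset V' E'" and Y: "Y \<in> Kset V' E'"
      have "X \<subseteq> V'" "Y \<subseteq> V'" using X Y by (auto simp: Kset_def)
      then have "lift E a b X - {a,b} = X" "lift E a b Y - {a,b} = Y"
        by (auto simp: lift_def V'_def)
      then show "(lift E a b X = lift E a b Y) = (X = Y)" by metis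
    next
      fix X assume X: "X \<in> Kset V' E'"
      have XV: "X \<subseteq> V'" using X by (auto simp: Kset_def)
      have fX: "finite X" using XV fV' finite_subset by blast
      have aX: "a \<notin> X" "b \<notin> X" using XV by (auto simp: V'_def)
      have sub: "lift E a b X \<subseteq> V" using XV a b by (auto simp: lift_def V'_def)
      have "\<not> pc (lift E a b X) (E i)" if i: "i \<in> V" for i
      proof -
        have eq: "pc (lift E a b X) (E i) = ((pc X (E i) \<noteq> (pc X (E a) \<and> E i b)) \<noteq> (pc X (E b) \<and> E i a))"
          by (rule pc_lift[OF fX aX ab])
        show ?thesis
        proof (cases "i = a \<or> i = b")
          case True
          then show ?thesis using eq irr a b eab sym[OF a b] by auto
        next
          case False
          then have iV: "i \<in> V'" using i by (auto simp: V'_def)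
          have "\<not> pc X (E' i)" using X iV by (auto simp: Kset_def)
          moreover have "pc X (E' i) = (pc X (E i) \<noteq> ((E i a \<and> pc X (E b)) \<noteq> (E i b \<and> pc X (E a))))"
            unfolding E'_def pivot_def
            by (subst pc_xor[OF fX], subst pc_xor[OF fX], simp only: pc_and_const)
          ultimately show ?thesis using eq by (cases "pc X (E i)"; cases "pc X (E a)"; cases "pc X (E b)"; cases "E i a"; cases "E i b"; simp)
        qed
      qed
      then show "lift E a b X \<in> Kset V E" using sub by (auto simp: Kset_def)
    next
      fix Y assume Y: "Y \<in> Kset V E"
      have YV: "Y \<subseteq> V" using Y by (auto simp: Kset_def)
      define X where "X = Y - {a,b}"
      have XV: "X \<subseteq> V'" using YV by (auto simp: X_def V'_def)
      have fX: "finite X" using XV fV' finite_subset by blast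
      have aX: "a \<notin> X" "b \<notin> X" by (auto simp: X_def)
      have fY: "finite Y" using YV fin finite_subset by blast
      have Yeq: "Y = X \<union> ((if b \<in> Y then {b} else {}) \<union> (if a \<in> Y then {a} else {}))"
        by (auto simp: X_def)
      have pcY: "pc Y P = ((pc X P \<noteq> (b \<in> Y \<and> P b)) \<noteq> (a \<in> Y \<and> P a))" for P
      proof -
        have "pc Y P = (pc X P \<noteq> pc ((if b \<in> Y then {b} else {}) \<union> (if a \<in> Y then {a} else {})) P)"
          by (subst Yeq, rule pc_union) (auto simp: fX aX)
        also have "pc ((if b \<in> Y then {b} else {}) \<union> (if a \<in> Y then {a} else {})) P
             = ((b \<in> Y \<and> P b) \<noteq> (a \<in> Y \<and> P a))"
          using ab by (auto simp: pc_insert)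
        finally show ?thesis by argo
      qed
      have ka: "\<not> pc Y (E a)" and kb: "\<not> pc Y (E b)" using Y a b by (auto simp: Kset_def)
      have bY: "(b \<in> Y) = pc X (E a)" using ka pcY[of "E a"] irr[OF a] eab by (cases "pc X (E a)"; cases "b \<in> Y"; cases "a \<in> Y"; simp)
      have aY: "(a \<in> Y) = pc X (E b)" using kb pcY[of "E b"] irr[OF b] eab sym[OF a b] by (cases "pc X (E b)"; cases "b \<in> Y"; cases "a \<in> Y"; simp)
      have Ylift: "Y = lift E a b X"
      proof -
        have "Y = X \<union> ((if pc X (E a) then {b} else {}) \<union> (if pc X (E b) then {a} else {}))"
          using Yeq by (simp only: bY aY)
        then show ?thesis unfolding lift_def by (simp add: Un_assoc)
      qed
      have "\<not> pc X (E' i)" if i: "i \<in> V'" for i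
      proof -
        have iV: "i \<in> V" using i by (auto simp: V'_def)
        have "\<not> pc Y (E i)" using Y iV by (auto simp: Kset_def)
        moreover have "pc X (E' i) = (pc X (E i) \<noteq> ((E i a \<and> pc X (E b)) \<noteq> (E i b \<and> pc X (E a))))"
          unfolding E'_def pivot_def
          by (subst pc_xor[OF fX], subst pc_xor[OF fX], simp only: pc_and_const)
        ultimately show ?thesis using pcY[of "E i"] aY bY by (cases "pc X (E i)"; cases "pc X (E a)"; cases "pc X (E b)"; cases "E i a"; cases "E i b"; simp)
      qed
      then have "X \<in> Kset V' E'" using XV by (auto simp: Kset_def)
      then show "\<exists>X\<in>Kset V' E'. Y = lift E a b X" using Ylift by blast
    qed
    then have "card (Kset V E) = card (Kset V' E')" by (simp add: bij_betw_same_card)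
    then show ?thesis using r cV' cV2 by (intro exI[of _ "Suc r"]) auto
  qed
qed



definition supp :: "(nat list \<Rightarrow> complex) \<Rightarrow> nat list set" where
  "supp p = {w. p w \<noteq> 0}"

definition mon :: "nat list \<Rightarrow> nat list \<Rightarrow> complex" where
  "mon l = (\<lambda>w. if w = l then 1 else 0)"

lemma supp_mult: "supp (fa_mult p q) \<subseteq> (\<lambda>x. fst x @ snd x) ` (supp p \<times> supp q)"
proof
  fix w assume "w \<in> supp (fa_mult p q)"
  then have "(\<Sum>i\<le>length w. p (take i w) * q (drop i w)) \<noteq> 0"
    by (simp add: supp_def fa_mult_def)
  then obtain i where "p (take i w) * q (drop i w) \<noteq> 0"
    by (meson sum.not_neutral_contains_not_neutral)
  then show "w \<in> (\<lambda>x. fst x @ snd x) ` (supp p \<times> supp q)"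
    by (intro image_eqI[of _ _ "(take i w, drop i w)"]) (auto simp: supp_def)
qed

lemma finite_supp_mult: "finite (supp p) \<Longrightarrow> finite (supp q) \<Longrightarrow> finite (supp (fa_mult p q))"
proof -
  assume "finite (supp p)" "finite (supp q)"
  then have "finite ((\<lambda>x. fst x @ snd x) ` (supp p \<times> supp q))" by simp
  then show ?thesis using supp_mult finite_subset by blast
qed

lemma mult_split:
  assumes U: "finite U" "supp p \<subseteq> U" and V: "finite V" "supp q \<subseteq> V"
  shows "fa_mult p q w = (\<Sum>x\<in>{x\<in>U \<times> V. fst x @ snd x = w}. p (fst x) * q (snd x))"
proof -
  let ?f = "\<lambda>i. (take i w, drop i w)"
  have inj: "inj_on ?f {..length w}"
  proof (rule inj_onI)
    fix i j assume "i \<in> {..length w}" "j \<in> {..length w}" "?f i = ?f j"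
    then show "i = j" by (metis atMost_iff length_take min.absorb2 prod.inject)
  qed
  have img: "?f ` {..length w} = {x. fst x @ snd x = w}"
  proof
    show "?f ` {..length w} \<subseteq> {x. fst x @ snd x = w}" by auto
    show "{x. fst x @ snd x = w} \<subseteq> ?f ` {..length w}"
    proof
      fix x :: "nat list \<times> nat list" assume "x \<in> {x. fst x @ snd x = w}"
      then have "fst x @ snd x = w" by simp
      then show "x \<in> ?f ` {..length w}"
        by (intro image_eqI[of _ _ "length (fst x)"]) auto
    qed
  qed
  have fin: "finite {x::nat list \<times> nat list. fst x @ snd x = w}"
    using img by (metis finite_atMost finite_imageI)
  have "fa_mult p q w = (\<Sum>x\<in>?f ` {..length w}. p (fst x) * q (snd x))"
    unfolding fa_mult_def by (subst sum.reindex[OF inj]) simp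
  also have "\<dots> = (\<Sum>x\<in>{x. fst x @ snd x = w}. p (fst x) * q (snd x))" by (simp add: img)
  also have "\<dots> = (\<Sum>x\<in>{x\<in>U \<times> V. fst x @ snd x = w}. p (fst x) * q (snd x))"
  proof (rule sum.mono_neutral_right[OF fin])
    show "{x \<in> U \<times> V. fst x @ snd x = w} \<subseteq> {x. fst x @ snd x = w}" by auto
    show "\<forall>i\<in>{x. fst x @ snd x = w} - {x \<in> U \<times> V. fst x @ snd x = w}. p (fst i) * q (snd i) = 0"
      using U V by (auto simp: supp_def mem_Times_iff)
  qed
  finally show ?thesis .
qed

lemma conv_sum:
  assumes U: "finite U" "supp p \<subseteq> U" and V: "finite V" "supp q \<subseteq> V"
  shows "(\<Sum>w\<in>(\<lambda>x. fst x @ snd x) ` (U \<times> V). fa_mult p q w * g w)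
       = (\<Sum>u\<in>U. \<Sum>v\<in>V. p u * q v * g (u @ v))"
proof -
  let ?h = "\<lambda>x. fst x @ snd x"
  have "(\<Sum>w\<in>?h ` (U \<times> V). fa_mult p q w * g w)
      = (\<Sum>w\<in>?h ` (U \<times> V). \<Sum>x\<in>{x\<in>U \<times> V. ?h x = w}. p (fst x) * q (snd x) * g (?h x))"
    by (rule sum.cong[OF refl]) (simp add: mult_split[OF U V] sum_distrib_right)
  also have "\<dots> = (\<Sum>x\<in>U \<times> V. p (fst x) * q (snd x) * g (?h x))"
    by (rule sum.group) (auto simp: U V)
  also have "\<dots> = (\<Sum>u\<in>U. \<Sum>v\<in>V. p u * q v * g (u @ v))"
    by (simp add: sum.cartesian_product split_def)
  finally show ?thesis .
qed

lemma conv_sum_supp: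
  assumes U: "finite U" "supp p \<subseteq> U" and V: "finite V" "supp q \<subseteq> V"
  shows "(\<Sum>w\<in>supp (fa_mult p q). fa_mult p q w * g w)
       = (\<Sum>u\<in>U. \<Sum>v\<in>V. p u * q v * g (u @ v))"
proof -
  let ?h = "\<lambda>x. fst x @ snd x"
  have "supp (fa_mult p q) \<subseteq> ?h ` (U \<times> V)" using supp_mult U V by blast
  then have "(\<Sum>w\<in>supp (fa_mult p q). fa_mult p q w * g w) = (\<Sum>w\<in>?h ` (U \<times> V). fa_mult p q w * g w)"
    by (intro sum.mono_neutral_left) (auto simp: U V supp_def)
  then show ?thesis using conv_sum[OF U V] by simp
qed

lemma mult_mon: "fa_mult (mon u) (mon v) = mon (u @ v)"
proof
  fix w
  have "fa_mult (mon u) (mon v) w = (\<Sum>x\<in>{x\<in>{u} \<times> {v}. fst x @ snd x = w}. mon u (fst x) * mon v (snd x))"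
    by (rule mult_split) (auto simp: supp_def mon_def)
  also have "\<dots> = mon (u @ v) w"
  proof (cases "u @ v = w")
    case True
    then have "{x\<in>{u} \<times> {v}. fst x @ snd x = w} = {(u,v)}" by auto
    then show ?thesis using True by (simp add: mon_def)
  next
    case False
    then have "{x\<in>{u} \<times> {v}. fst x @ snd x = w} = {}" by auto
    then show ?thesis using False by (simp add: mon_def)
  qed
  finally show "fa_mult (mon u) (mon v) w = mon (u @ v) w" .
qed

lemma mult_add_left: "fa_mult (fa_add x y) z = fa_add (fa_mult x z) (fa_mult y z)"
  by (auto simp: fa_mult_def fa_add_def sum.distrib algebra_simps)
lemma mult_add_right: "fa_mult z (fa_add x y) = fa_add (fa_mult z x) (fa_mult z y)"
  by (auto simp: fa_mult_def fa_add_def sum.distrib algebra_simps)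
lemma mult_sub_left: "fa_mult (fa_sub x y) z = fa_sub (fa_mult x z) (fa_mult y z)"
  by (auto simp: fa_mult_def fa_sub_def sum_subtractf algebra_simps)
lemma mult_sub_right: "fa_mult z (fa_sub x y) = fa_sub (fa_mult z x) (fa_mult z y)"
  by (auto simp: fa_mult_def fa_sub_def sum_subtractf algebra_simps)
lemma mult_smult_left: "fa_mult (fa_smult c x) z = fa_smult c (fa_mult x z)"
  by (auto simp: fa_mult_def fa_smult_def sum_distrib_left algebra_simps)
lemma mult_smult_right: "fa_mult z (fa_smult c x) = fa_smult c (fa_mult z x)"
  by (auto simp: fa_mult_def fa_smult_def sum_distrib_left algebra_simps)

lemma gen_mon: "fa_gen i = mon [i]" by (simp add: fa_gen_def mon_def)
lemma one_mon: "fa_one = mon []" by (simp add: fa_one_def mon_def)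



definition Pw :: "nat list \<Rightarrow> nat set" where "Pw w = {i. odd (count_list w i)}"
definition sgb :: "bool \<Rightarrow> complex" where "sgb b = (if b then -1 else 1)"
definition sL :: "(nat \<Rightarrow> nat \<Rightarrow> bool) \<Rightarrow> nat \<Rightarrow> nat set \<Rightarrow> bool" where
  "sL E i S = (pc S (\<lambda>t. t < i \<and> E i t) \<noteq> (i \<in> S))"
definition sR :: "(nat \<Rightarrow> nat \<Rightarrow> bool) \<Rightarrow> nat \<Rightarrow> nat set \<Rightarrow> bool" where
  "sR E j S = (pc S (\<lambda>t. j < t \<and> E j t) \<noteq> (j \<in> S))"

fun cb :: "(nat \<Rightarrow> nat \<Rightarrow> bool) \<Rightarrow> nat list \<Rightarrow> bool" where
  "cb E [] = False" | "cb E (i#w) = (sL E i (Pw w) \<noteq> cb E w)"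
fun FR :: "(nat \<Rightarrow> nat \<Rightarrow> bool) \<Rightarrow> nat set \<Rightarrow> nat list \<Rightarrow> bool" where
  "FR E S [] = False" | "FR E S (j#v) = (sR E j S \<noteq> FR E (sd S {j}) v)"
fun FL :: "(nat \<Rightarrow> nat \<Rightarrow> bool) \<Rightarrow> nat list \<Rightarrow> nat set \<Rightarrow> bool" where
  "FL E [] S = False" | "FL E (i#v) S = (sL E i (sd (Pw v) S) \<noteq> FL E v S)"

lemma sd_sd[simp]: "sd (sd A B) B = A" by (auto simp: sd_def)
lemma sd_comm: "sd A B = sd B A" by (auto simp: sd_def)
lemma sd_eq_iff: "(sd S X = T) = (S = sd T X)" by (auto simp: sd_def)
lemma sd_empty[simp]: "sd A {} = A" "sd {} A = A" by (auto simp: sd_def)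
lemma finite_sd[simp]: "finite A \<Longrightarrow> finite B \<Longrightarrow> finite (sd A B)" by (simp add: sd_def)
lemma sd_sub: "A \<subseteq> X \<Longrightarrow> B \<subseteq> X \<Longrightarrow> sd A B \<subseteq> X" by (auto simp: sd_def)

lemma Pw_Nil[simp]: "Pw [] = {}" by (simp add: Pw_def)
lemma Pw_Cons: "Pw (i#w) = sd (Pw w) {i}" by (auto simp: Pw_def sd_def)
lemma Pw_append: "Pw (u@v) = sd (Pw u) (Pw v)" by (auto simp: Pw_def sd_def)
lemma Pw_sub: "Pw w \<subseteq> set w" using count_notin by (fastforce simp: Pw_def)
lemma finite_Pw[simp]: "finite (Pw w)" using Pw_sub finite_subset by blast
lemma Pw_distinct: "distinct l \<Longrightarrow> Pw l = set l"
  by (induction l) (auto simp: Pw_Cons sd_def)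
lemma Pw_comm: "Pw (u@v) = Pw (v@u)" by (simp add: Pw_append sd_comm)

lemma sgb_xor: "sgb (a \<noteq> b) = sgb a * sgb b" by (auto simp: sgb_def)
lemma sgb_nz[simp]: "sgb a \<noteq> 0" by (auto simp: sgb_def)
lemma sgb_inj: "(sgb a = sgb b) = (a = b)" by (auto simp: sgb_def)

lemma cb_appL: "cb E (v@u) = (FL E v (Pw u) \<noteq> cb E u)"
  by (induction v) (auto simp: Pw_append)

lemma cb_sorted: "sorted_wrt (<) l \<Longrightarrow> cb E l = False"
proof (induction l)
  case Nil then show ?case by simp
next
  case (Cons i l)
  have d: "distinct l" using Cons.prems strict_sorted_iff by auto
  have "pc (set l) (\<lambda>t. t < i \<and> E i t) = False" using Cons.prems by (intro pc_false) auto
  moreover have "i \<notin> set l" using Cons.prems by auto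
  ultimately show ?case using Cons by (simp add: sL_def Pw_distinct[OF d])
qed

locale cg =
  fixes n :: nat and E :: "nat \<Rightarrow> nat \<Rightarrow> bool"
  assumes simple: "simple_graph n E"
begin

lemma sym: "i \<in> {1..n} \<Longrightarrow> j \<in> {1..n} \<Longrightarrow> E i j = E j i"
  using simple by (auto simp: simple_graph_def)
lemma irr: "i \<in> {1..n} \<Longrightarrow> \<not> E i i"
  using simple by (auto simp: simple_graph_def)

lemma commute:
  assumes f: "finite S" and i: "i \<in> {1..n}" and j: "j \<in> {1..n}"
  shows "(sL E i (sd S {j}) \<noteq> sR E j S) = (sL E i S \<noteq> sR E j (sd S {i}))"
proof (cases "i = j")
  case True
  have m: "(i \<in> sd S {i}) = (i \<notin> S)" by (auto simp: sd_def)
  show ?thesis using True unfolding sL_def sR_def pc_sd1[OF f] m by auto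
next
  case False
  have m: "(i \<in> sd S {j}) = (i \<in> S)" "(j \<in> sd S {i}) = (j \<in> S)" using False by (auto simp: sd_def)
  have e: "(j < i \<and> E i j) = (j < i \<and> E j i)" using sym[OF i j] by auto
  show ?thesis unfolding sL_def sR_def pc_sd1[OF f] m using e by auto
qed

lemma cb_snoc:
  assumes "set u \<subseteq> {1..n}" "j \<in> {1..n}"
  shows "cb E (u@[j]) = (cb E u \<noteq> sR E j (Pw u))"
  using assms
proof (induction u)
  case Nil then show ?case by (simp add: sL_def sR_def)
next
  case (Cons i u)
  have i: "i \<in> {1..n}" using Cons.prems by auto
  have IH: "cb E (u@[j]) = (cb E u \<noteq> sR E j (Pw u))" using Cons by auto
  have "cb E ((i#u)@[j]) = (sL E i (sd (Pw u) {j}) \<noteq> cb E (u@[j]))"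
    by (simp add: Pw_append Pw_Cons)
  also have "\<dots> = ((sL E i (sd (Pw u) {j}) \<noteq> sR E j (Pw u)) \<noteq> cb E u)" using IH by auto
  also have "\<dots> = ((sL E i (Pw u) \<noteq> sR E j (sd (Pw u) {i})) \<noteq> cb E u)"
    using commute[OF finite_Pw i Cons.prems(2)] by simp
  also have "\<dots> = (cb E (i#u) \<noteq> sR E j (Pw (i#u)))" by (auto simp: Pw_Cons)
  finally show ?case .
qed

lemma cb_appR:
  assumes "set u \<subseteq> {1..n}" "set v \<subseteq> {1..n}"
  shows "cb E (u@v) = (cb E u \<noteq> FR E (Pw u) v)"
  using assms
proof (induction v arbitrary: u)
  case Nil then show ?case by simp
next
  case (Cons j v)
  have "cb E (u@j#v) = cb E ((u@[j])@v)" by simp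
  also have "\<dots> = (cb E (u@[j]) \<noteq> FR E (Pw (u@[j])) v)" using Cons.IH[of "u@[j]"] Cons.prems by auto
  also have "\<dots> = ((cb E u \<noteq> sR E j (Pw u)) \<noteq> FR E (sd (Pw u) {j}) v)"
    using cb_snoc Cons.prems by (simp add: Pw_append Pw_Cons)
  also have "\<dots> = (cb E u \<noteq> FR E (Pw u) (j#v))" by auto
  finally show ?case .
qed

lemma sL_sR:
  assumes "finite S" "S \<subseteq> {1..n}" "i \<in> {1..n}"
  shows "(sL E i S \<noteq> sR E i S) = pc S (E i)"
proof -
  have "(sL E i S \<noteq> sR E i S) = (pc S (\<lambda>t. t < i \<and> E i t) \<noteq> pc S (\<lambda>t. i < t \<and> E i t))"
    unfolding sL_def sR_def by auto
  also have "\<dots> = pc S (\<lambda>t. (t < i \<and> E i t) \<noteq> (i < t \<and> E i t))"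
    by (subst pc_xor[OF assms(1)]) (rule refl)
  also have "\<dots> = pc S (E i)"
  proof (rule pc_cong)
    fix t assume "t \<in> S"
    then have "t \<in> {1..n}" using assms by auto
    then show "((t < i \<and> E i t) \<noteq> (i < t \<and> E i t)) = E i t"
      using irr[of t] by (cases "t = i") auto
  qed
  finally show ?thesis .
qed

definition K :: "nat set set" where "K = Kset {1..n} E"

lemma lemA:
  assumes w: "set w \<subseteq> {1..n}" and PK: "Pw w \<in> K" and j: "j \<in> {1..n}" and y: "set y \<subseteq> {1..n}"
  shows "cb E (w@[j]@y) = cb E (j#w@y)"
proof -
  have PS: "Pw w \<subseteq> {1..n}" using Pw_sub w by blast
  have np: "\<not> pc (Pw w) (E j)" using PK j by (auto simp: K_def Kset_def)
  have eq: "sR E j (Pw w) = sL E j (Pw w)" using sL_sR[OF finite_Pw PS j] np by auto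
  have "cb E (w@[j]@y) = cb E ((w@[j])@y)" by simp
  also have "\<dots> = (cb E (w@[j]) \<noteq> FR E (Pw (w@[j])) y)" by (rule cb_appR) (use w j y in auto)
  also have "\<dots> = (cb E (j#w) \<noteq> FR E (Pw (j#w)) y)"
    using cb_snoc[OF w j] eq by (auto simp: Pw_append Pw_Cons)
  also have "\<dots> = cb E ((j#w)@y)" by (rule cb_appR[symmetric]) (use w j y in auto)
  finally show ?thesis by simp
qed

lemma lemB:
  assumes w: "set w \<subseteq> {1..n}" and PK: "Pw w \<in> K" and v: "set v \<subseteq> {1..n}"
  shows "cb E (w@v) = cb E (v@w)"
  using v
proof (induction v)
  case Nil then show ?case by simp
next
  case (Cons j v)
  have "cb E (w@j#v) = cb E (j#w@v)" using lemA[OF w PK, of j v] Cons.prems by auto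
  also have "\<dots> = (sL E j (Pw (w@v)) \<noteq> cb E (w@v))" by simp
  also have "\<dots> = (sL E j (Pw (v@w)) \<noteq> cb E (v@w))" using Cons Pw_comm by auto
  also have "\<dots> = cb E ((j#v)@w)" by simp
  finally show ?case .
qed

end


definition Phi :: "(nat \<Rightarrow> nat \<Rightarrow> bool) \<Rightarrow> nat list \<Rightarrow> nat set \<Rightarrow> complex" where
  "Phi E w T = (if Pw w = T then sgb (cb E w) else 0)"
definition phi :: "(nat \<Rightarrow> nat \<Rightarrow> bool) \<Rightarrow> (nat list \<Rightarrow> complex) \<Rightarrow> nat set \<Rightarrow> complex" where
  "phi E p T = (\<Sum>w\<in>supp p. p w * Phi E w T)"

lemma phi_superset: "finite W \<Longrightarrow> supp p \<subseteq> W \<Longrightarrow> phi E p T = (\<Sum>w\<in>W. p w * Phi E w T)"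
  unfolding phi_def by (rule sum.mono_neutral_left) (auto simp: supp_def)

lemma supp_add: "supp (fa_add x y) \<subseteq> supp x \<union> supp y" by (auto simp: supp_def fa_add_def)
lemma supp_sub: "supp (fa_sub x y) \<subseteq> supp x \<union> supp y" by (auto simp: supp_def fa_sub_def)
lemma supp_smult: "supp (fa_smult c x) \<subseteq> supp x" by (auto simp: supp_def fa_smult_def)
lemma supp_mon: "supp (mon w) = {w}" by (auto simp: supp_def mon_def)
lemma finite_supp_mon: "finite (supp (mon w))" by (simp add: supp_mon)

lemma phi_add: "finite (supp x) \<Longrightarrow> finite (supp y) \<Longrightarrow> phi E (fa_add x y) T = phi E x T + phi E y T"
proof -
  assume fx: "finite (supp x)" and fy: "finite (supp y)"
  let ?W = "supp x \<union> supp y"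
  have "phi E (fa_add x y) T = (\<Sum>w\<in>?W. fa_add x y w * Phi E w T)"
    using fx fy supp_add by (intro phi_superset) auto
  also have "\<dots> = (\<Sum>w\<in>?W. x w * Phi E w T) + (\<Sum>w\<in>?W. y w * Phi E w T)"
    by (simp add: fa_add_def sum.distrib algebra_simps)
  also have "\<dots> = phi E x T + phi E y T"
    using fx fy phi_superset[of ?W x E T] phi_superset[of ?W y E T] by auto
  finally show ?thesis .
qed

lemma phi_sub: "finite (supp x) \<Longrightarrow> finite (supp y) \<Longrightarrow> phi E (fa_sub x y) T = phi E x T - phi E y T"
proof -
  assume fx: "finite (supp x)" and fy: "finite (supp y)"
  let ?W = "supp x \<union> supp y"
  have "phi E (fa_sub x y) T = (\<Sum>w\<in>?W. fa_sub x y w * Phi E w T)"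
    using fx fy supp_sub by (intro phi_superset) auto
  also have "\<dots> = (\<Sum>w\<in>?W. x w * Phi E w T) - (\<Sum>w\<in>?W. y w * Phi E w T)"
    by (simp add: fa_sub_def sum_subtractf algebra_simps)
  also have "\<dots> = phi E x T - phi E y T"
    using fx fy phi_superset[of ?W x E T] phi_superset[of ?W y E T] by auto
  finally show ?thesis .
qed

lemma phi_smult: "finite (supp x) \<Longrightarrow> phi E (fa_smult c x) T = c * phi E x T"
proof -
  assume fx: "finite (supp x)"
  have "phi E (fa_smult c x) T = (\<Sum>w\<in>supp x. fa_smult c x w * Phi E w T)"
    using fx supp_smult by (intro phi_superset) auto
  then show ?thesis by (simp add: fa_smult_def phi_def sum_distrib_left algebra_simps)
qed

lemma phi_mon: "phi E (mon w) T = Phi E w T"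
  by (simp add: phi_def supp_mon) (simp add: mon_def)

lemma phi_zero: "phi E fa_zero T = 0"
  by (simp add: phi_def supp_def fa_zero_def)

definition rng :: "nat \<Rightarrow> (nat list \<Rightarrow> complex) \<Rightarrow> bool" where
  "rng n p \<longleftrightarrow> (\<forall>w\<in>supp p. set w \<subseteq> {1..n})"

lemma free_alg_iff: "p \<in> free_alg n \<longleftrightarrow> finite (supp p) \<and> rng n p"
  by (auto simp: free_alg_def supp_def rng_def)

lemma free_alg_add: "x \<in> free_alg n \<Longrightarrow> y \<in> free_alg n \<Longrightarrow> fa_add x y \<in> free_alg n"
  using supp_add unfolding free_alg_iff rng_def by (meson finite_UnI finite_subset subsetD UnE)
lemma free_alg_sub: "x \<in> free_alg n \<Longrightarrow> y \<in> free_alg n \<Longrightarrow> fa_sub x y \<in> free_alg n"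
  using supp_sub unfolding free_alg_iff rng_def by (meson finite_UnI finite_subset subsetD UnE)
lemma free_alg_smult: "x \<in> free_alg n \<Longrightarrow> fa_smult c x \<in> free_alg n"
  using supp_smult unfolding free_alg_iff rng_def by (meson finite_subset subsetD)
lemma free_alg_mon: "set w \<subseteq> {1..n} \<Longrightarrow> mon w \<in> free_alg n"
  unfolding free_alg_iff rng_def supp_mon by auto
lemma free_alg_zero: "fa_zero \<in> free_alg n"
  unfolding free_alg_iff rng_def by (simp add: supp_def fa_zero_def)
lemma free_alg_mult: "x \<in> free_alg n \<Longrightarrow> y \<in> free_alg n \<Longrightarrow> fa_mult x y \<in> free_alg n"
proof -
  assume x: "x \<in> free_alg n" and y: "y \<in> free_alg n"
  then have f: "finite (supp (fa_mult x y))" using finite_supp_mult by (auto simp: free_alg_iff)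
  have "rng n (fa_mult x y)"
    unfolding rng_def
  proof
    fix w assume "w \<in> supp (fa_mult x y)"
    then obtain u v where "u \<in> supp x" "v \<in> supp y" "w = u @ v" using supp_mult[of x y] by force
    then show "set w \<subseteq> {1..n}" using x y by (auto simp: free_alg_iff rng_def)
  qed
  then show ?thesis using f by (simp add: free_alg_iff)
qed

lemma Pw_two: "Pw [i,j] = sd {j} {i}" by (simp add: Pw_Cons)

lemma cb_two: "cb E [i,j] = ((j < i \<and> E i j) \<noteq> (i = j))"
  by (auto simp: sL_def Pw_Cons pc_insert)

context cg begin

lemma Phi_appR:
  assumes "set u \<subseteq> {1..n}" "set v \<subseteq> {1..n}"
  shows "Phi E (u@v) T = Phi E u (sd T (Pw v)) * sgb (FR E (sd T (Pw v)) v)"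
  using cb_appR[OF assms] unfolding Phi_def Pw_append
  by (auto simp: sd_eq_iff sgb_def)

lemma Phi_appL:
  shows "Phi E (v@u) T = Phi E u (sd T (Pw v)) * sgb (FL E v (sd T (Pw v)))"
proof (cases "Pw u = sd T (Pw v)")
  case True
  then have "Pw (v@u) = T" by (simp add: Pw_append sd_comm[of "Pw v"])
  then show ?thesis using True cb_appL[of E v u] by (auto simp: Phi_def sgb_def)
next
  case False
  then have "Pw (v@u) \<noteq> T" by (auto simp: Pw_append sd_comm[of "Pw v"])
  then show ?thesis using False by (simp add: Phi_def)
qed

lemma phi_multR:
  assumes p: "p \<in> free_alg n" and q: "q \<in> free_alg n"
  shows "phi E (fa_mult p q) T = (\<Sum>v\<in>supp q. q v * sgb (FR E (sd T (Pw v)) v) * phi E p (sd T (Pw v)))"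
proof -
  have fp: "finite (supp p)" and fq: "finite (supp q)" using p q by (auto simp: free_alg_iff)
  have "phi E (fa_mult p q) T = (\<Sum>u\<in>supp p. \<Sum>v\<in>supp q. p u * q v * Phi E (u@v) T)"
    unfolding phi_def by (rule conv_sum_supp) (auto simp: fp fq)
  also have "\<dots> = (\<Sum>u\<in>supp p. \<Sum>v\<in>supp q. q v * sgb (FR E (sd T (Pw v)) v) * (p u * Phi E u (sd T (Pw v))))"
  proof (intro sum.cong refl)
    fix u v assume "u \<in> supp p" "v \<in> supp q"
    then have "set u \<subseteq> {1..n}" "set v \<subseteq> {1..n}" using p q by (auto simp: free_alg_iff rng_def)
    then show "p u * q v * Phi E (u@v) T = q v * sgb (FR E (sd T (Pw v)) v) * (p u * Phi E u (sd T (Pw v)))"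
      by (simp add: Phi_appR)
  qed
  also have "\<dots> = (\<Sum>v\<in>supp q. \<Sum>u\<in>supp p. q v * sgb (FR E (sd T (Pw v)) v) * (p u * Phi E u (sd T (Pw v))))"
    by (rule sum.swap)
  also have "\<dots> = (\<Sum>v\<in>supp q. q v * sgb (FR E (sd T (Pw v)) v) * phi E p (sd T (Pw v)))"
    by (simp add: phi_def sum_distrib_left)
  finally show ?thesis .
qed

lemma phi_multL:
  assumes p: "p \<in> free_alg n" and q: "q \<in> free_alg n"
  shows "phi E (fa_mult q p) T = (\<Sum>v\<in>supp q. q v * sgb (FL E v (sd T (Pw v))) * phi E p (sd T (Pw v)))"
proof -
  have fp: "finite (supp p)" and fq: "finite (supp q)" using p q by (auto simp: free_alg_iff)
  have "phi E (fa_mult q p) T = (\<Sum>v\<in>supp q. \<Sum>u\<in>supp p. q v * p u * Phi E (v@u) T)"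
    unfolding phi_def by (rule conv_sum_supp) (auto simp: fp fq)
  also have "\<dots> = (\<Sum>v\<in>supp q. \<Sum>u\<in>supp p. q v * sgb (FL E v (sd T (Pw v))) * (p u * Phi E u (sd T (Pw v))))"
    by (intro sum.cong refl) (simp add: Phi_appL)
  also have "\<dots> = (\<Sum>v\<in>supp q. q v * sgb (FL E v (sd T (Pw v))) * phi E p (sd T (Pw v)))"
    by (simp add: phi_def sum_distrib_left)
  finally show ?thesis .
qed

lemma ideal_phi:
  assumes "x \<in> clifford_ideal n E"
  shows "x \<in> free_alg n \<and> phi E x = (\<lambda>_. 0)"
  using assms
proof (induction rule: clifford_ideal.induct)
  case (rel r)
  then consider (a) i where "i \<in> {1..n}" "r = fa_add (mon [i,i]) (mon [])"
    | (b) i j where "i \<in> {1..n}" "j \<in> {1..n}" "i \<noteq> j" "E i j" "r = fa_add (mon [i,j]) (mon [j,i])"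
    | (c) i j where "i \<in> {1..n}" "j \<in> {1..n}" "i \<noteq> j" "\<not> E i j" "r = fa_sub (mon [i,j]) (mon [j,i])"
    unfolding clifford_relations_def gen_mon one_mon mult_mon by auto
  then show ?case
  proof cases
    case a
    have fa: "r \<in> free_alg n" using a by (auto intro!: free_alg_add free_alg_mon)
    have "phi E r T = 0" for T
    proof -
      have P1: "Pw [i,i] = {}" by (auto simp: Pw_Cons sd_def)
      have c1: "cb E [i,i]" by (simp only: cb_two) simp
      show ?thesis
        unfolding a(2) phi_add[OF finite_supp_mon finite_supp_mon]
        by (simp add: phi_mon Phi_def P1 c1 sgb_def del: cb.simps(2))
    qed
    then show ?thesis using fa by auto
  next
    case b
    have fa: "r \<in> free_alg n" using b by (auto intro!: free_alg_add free_alg_mon)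
    have s: "E j i" using sym b by auto
    have P1: "Pw [i,j] = {i,j}" "Pw [j,i] = {i,j}" using b by (auto simp: Pw_Cons sd_def)
    have c1: "cb E [i,j] = (\<not> cb E [j,i])" unfolding cb_two using b s by (cases "i < j") auto
    have "phi E r T = 0" for T
      unfolding b(5) phi_add[OF finite_supp_mon finite_supp_mon]
      by (simp add: phi_mon Phi_def P1 c1 sgb_def del: cb.simps)
    then show ?thesis using fa by auto
  next
    case c
    have fa: "r \<in> free_alg n" using c by (auto intro!: free_alg_sub free_alg_mon)
    have s: "\<not> E j i" using sym c by auto
    have P1: "Pw [i,j] = {i,j}" "Pw [j,i] = {i,j}" using c by (auto simp: Pw_Cons sd_def)
    have c1: "cb E [i,j] = cb E [j,i]" unfolding cb_two using c s by (cases "i < j") auto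
    have "phi E r T = 0" for T
      unfolding c(5) phi_sub[OF finite_supp_mon finite_supp_mon]
      by (simp add: phi_mon Phi_def P1 c1 del: cb.simps)
    then show ?thesis using fa by auto
  qed
next
  case zero
  then show ?case by (auto simp: free_alg_zero phi_zero)
next
  case (add x y)
  then have "fa_add x y \<in> free_alg n" by (auto intro: free_alg_add)
  then show ?case using add by (auto simp: phi_add free_alg_iff)
next
  case (smult x c)
  then have "fa_smult c x \<in> free_alg n" by (auto intro: free_alg_smult)
  then show ?case using smult by (auto simp: phi_smult free_alg_iff)
next
  case (lmult a x)
  have "phi E (fa_mult a x) T = 0" for T using phi_multL[of x a T] lmult by simp
  then show ?case using lmult free_alg_mult by auto
next
  case (rmult a x)
  have "phi E (fa_mult x a) T = 0" for T using phi_multR[of x a T] rmult by simp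
  then show ?case using rmult free_alg_mult by auto
qed

end


abbreviation sl :: "nat set \<Rightarrow> nat list" where "sl \<equiv> sorted_list_of_set"

lemma sl_set: "sorted_wrt (<) l \<Longrightarrow> sl (set l) = l"
  by (simp add: sorted_list_of_set.idem_if_sorted_distinct strict_sorted_iff)

lemma sl_insert_min:
  assumes "finite X" "\<forall>x\<in>X. t < x"
  shows "sl (insert t X) = t # sl X"
proof -
  have "sorted_wrt (<) (t # sl X)"
    using assms by (simp add: strict_sorted_list_of_set)
  moreover have "set (t # sl X) = insert t X" using assms by simp
  ultimately show ?thesis using sl_set by metis
qed

lemma fa_sub_self: "fa_sub p p = fa_zero" by (simp add: fa_sub_def fa_zero_def)
lemma smult_one: "fa_smult 1 p = p" by (simp add: fa_smult_def)
lemma smult_smult: "fa_smult a (fa_smult b p) = fa_smult (a * b) p" by (simp add: fa_smult_def mult.assoc)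
lemma sgb_xor': "sgb (a = (\<not> b)) = sgb a * sgb b" by (auto simp: sgb_def)

context cg begin

abbreviation I where "I \<equiv> clifford_ideal n E"

definition cgr :: "(nat list \<Rightarrow> complex) \<Rightarrow> (nat list \<Rightarrow> complex) \<Rightarrow> bool" where
  "cgr p q \<longleftrightarrow> fa_sub p q \<in> I"

lemma I_sub: "x \<in> I \<Longrightarrow> y \<in> I \<Longrightarrow> fa_sub x y \<in> I"
proof -
  assume "x \<in> I" "y \<in> I"
  then have "fa_add x (fa_smult (-1) y) \<in> I" by (intro clifford_ideal.add clifford_ideal.smult)
  moreover have "fa_add x (fa_smult (-1) y) = fa_sub x y" by (simp add: fa_add_def fa_smult_def fa_sub_def)
  ultimately show ?thesis by simp
qed

lemma cgr_refl: "cgr p p" by (simp add: cgr_def fa_sub_self clifford_ideal.zero)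

lemma cgr_trans: "cgr p q \<Longrightarrow> cgr q r \<Longrightarrow> cgr p r"
proof -
  assume "cgr p q" "cgr q r"
  then have "fa_add (fa_sub p q) (fa_sub q r) \<in> I" by (simp add: cgr_def clifford_ideal.add)
  moreover have "fa_add (fa_sub p q) (fa_sub q r) = fa_sub p r" by (simp add: fa_add_def fa_sub_def)
  ultimately show ?thesis by (simp add: cgr_def)
qed

lemma cgr_smult: "cgr p q \<Longrightarrow> cgr (fa_smult c p) (fa_smult c q)"
proof -
  assume "cgr p q"
  then have "fa_smult c (fa_sub p q) \<in> I" by (simp add: cgr_def clifford_ideal.smult)
  moreover have "fa_smult c (fa_sub p q) = fa_sub (fa_smult c p) (fa_smult c q)"
    by (simp add: fa_smult_def fa_sub_def algebra_simps)
  ultimately show ?thesis by (simp add: cgr_def)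
qed

lemma cgr_lmult: "a \<in> free_alg n \<Longrightarrow> cgr p q \<Longrightarrow> cgr (fa_mult a p) (fa_mult a q)"
  unfolding cgr_def mult_sub_right[symmetric] by (rule clifford_ideal.lmult)

lemma cgr_rmult: "a \<in> free_alg n \<Longrightarrow> cgr p q \<Longrightarrow> cgr (fa_mult p a) (fa_mult q a)"
  unfolding cgr_def mult_sub_left[symmetric] by (rule clifford_ideal.rmult)

lemma I_sum: "finite W \<Longrightarrow> (\<forall>w\<in>W. g w \<in> I) \<Longrightarrow> (\<lambda>x. \<Sum>w\<in>W. g w x) \<in> I"
proof (induction W rule: finite_induct)
  case empty
  have "(\<lambda>x. \<Sum>w\<in>{}. g w x) = fa_zero" by (simp add: fa_zero_def)
  then show ?case by (simp add: clifford_ideal.zero)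
next
  case (insert a W)
  have "(\<lambda>x. \<Sum>w\<in>insert a W. g w x) = fa_add (g a) (\<lambda>x. \<Sum>w\<in>W. g w x)"
    using insert by (simp add: fa_add_def)
  then show ?case using insert by (simp add: clifford_ideal.add)
qed

lemma moving:
  assumes "sorted_wrt (<) l" "set l \<subseteq> {1..n}" "i \<in> {1..n}"
  shows "cgr (mon (i#l)) (fa_smult (sgb (sL E i (set l))) (mon (sl (sd (set l) {i}))))"
  using assms
proof (induction l)
  case Nil
  have "sd {} {i} = {i}" by (simp add: sd_def)
  then show ?case by (simp add: sL_def sgb_def smult_one cgr_refl)
next
  case (Cons t l')
  have ltl: "\<forall>x\<in>set l'. t < x" and sl': "sorted_wrt (<) l'" using Cons.prems by auto
  have t: "t \<in> {1..n}" and l'r: "set l' \<subseteq> {1..n}" using Cons.prems by auto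
  have tnot: "t \<notin> set l'" using ltl by auto
  have ml': "mon l' \<in> free_alg n" using l'r by (rule free_alg_mon)
  consider (lt) "i < t" | (eq) "i = t" | (gt) "t < i" by linarith
  then show ?case
  proof cases
    case lt
    have inot: "i \<notin> set (t#l')" using lt Cons.prems by auto
    have "sd (set (t#l')) {i} = insert i (set (t#l'))" using inot by (auto simp: sd_def)
    moreover have "sl (insert i (set (t#l'))) = i # t # l'"
    proof -
      have "sl (insert i (set (t#l'))) = i # sl (set (t#l'))"
        by (rule sl_insert_min) (use lt Cons.prems in auto)
      then show ?thesis using sl_set[OF Cons.prems(1)] by simp
    qed
    moreover have "sL E i (set (t#l')) = False"
    proof -
      have "pc (set (t#l')) (\<lambda>s. s < i \<and> E i s) = False"
        by (rule pc_false) (use lt ltl in force)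
      then show ?thesis unfolding sL_def using inot by simp
    qed
    ultimately show ?thesis by (simp add: sgb_def smult_one cgr_refl)
  next
    case eq
    have inot: "i \<notin> set l'" using eq tnot by auto
    have "sd (set (t#l')) {i} = set l'" using eq inot by (auto simp: sd_def)
    moreover have "sL E i (set (t#l')) = True"
    proof -
      have "pc (set (t#l')) (\<lambda>s. s < i \<and> E i s) = False"
        by (rule pc_false) (use eq ltl in force)
      then show ?thesis unfolding sL_def using eq by simp
    qed
    moreover have "fa_sub (mon (i#i#l')) (fa_smult (-1) (mon l')) \<in> I"
    proof -
      have "fa_add (mon [i,i]) (mon []) \<in> I"
        using Cons.prems(3) by (intro clifford_ideal.rel) (auto simp: clifford_relations_def gen_mon one_mon mult_mon)
      then have "fa_mult (fa_add (mon [i,i]) (mon [])) (mon l') \<in> I"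
        using ml' by (intro clifford_ideal.rmult)
      moreover have "fa_mult (fa_add (mon [i,i]) (mon [])) (mon l') = fa_sub (mon (i#i#l')) (fa_smult (-1) (mon l'))"
        by (simp add: mult_add_left mult_mon) (simp add: fa_add_def fa_sub_def fa_smult_def)
      ultimately show ?thesis by simp
    qed
    ultimately show ?thesis using eq sl' by (simp add: sgb_def sl_set cgr_def)
  next
    case gt
    define \<sigma> where "\<sigma> = sgb (E i t)"
    define L' where "L' = sl (sd (set l') {i})"
    define s' where "s' = sgb (sL E i (set l'))"
    have ti: "t \<noteq> i" using gt by simp
    have R: "cgr (mon (i#t#l')) (fa_smult \<sigma> (mon (t#i#l')))"
    proof (cases "E i t")
      case True
      have "fa_add (mon [i,t]) (mon [t,i]) \<in> I"
        using Cons.prems(3) t ti True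
        by (intro clifford_ideal.rel) (auto simp: clifford_relations_def gen_mon one_mon mult_mon)
      then have "fa_mult (fa_add (mon [i,t]) (mon [t,i])) (mon l') \<in> I"
        using ml' by (intro clifford_ideal.rmult)
      moreover have "fa_mult (fa_add (mon [i,t]) (mon [t,i])) (mon l') = fa_sub (mon (i#t#l')) (fa_smult \<sigma> (mon (t#i#l')))"
        using True by (simp add: mult_add_left mult_mon \<sigma>_def sgb_def) (simp add: fa_add_def fa_sub_def fa_smult_def)
      ultimately show ?thesis by (simp add: cgr_def)
    next
      case False
      have "fa_sub (mon [i,t]) (mon [t,i]) \<in> I"
        using Cons.prems(3) t ti False
        by (intro clifford_ideal.rel) (auto simp: clifford_relations_def gen_mon one_mon mult_mon)
      then have "fa_mult (fa_sub (mon [i,t]) (mon [t,i])) (mon l') \<in> I"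
        using ml' by (intro clifford_ideal.rmult)
      moreover have "fa_mult (fa_sub (mon [i,t]) (mon [t,i])) (mon l') = fa_sub (mon (i#t#l')) (fa_smult \<sigma> (mon (t#i#l')))"
        using False by (simp add: mult_sub_left mult_mon \<sigma>_def sgb_def smult_one)
      ultimately show ?thesis by (simp add: cgr_def)
    qed
    have IH: "cgr (mon (i#l')) (fa_smult s' (mon L'))"
      using Cons.IH sl' l'r Cons.prems(3) by (simp add: s'_def L'_def)
    have mt: "mon [t] \<in> free_alg n" using t by (intro free_alg_mon) auto
    have IH2: "cgr (mon (t#i#l')) (fa_smult s' (mon (t#L')))"
      using cgr_lmult[OF mt IH] by (simp add: mult_mon mult_smult_right)
    have C: "cgr (mon (i#t#l')) (fa_smult (\<sigma> * s') (mon (t#L')))"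
      using cgr_trans[OF R cgr_smult[OF IH2, of \<sigma>]] by (simp add: smult_smult)
    have e1: "sd (set (t#l')) {i} = insert t (sd (set l') {i})" using ti tnot by (auto simp: sd_def)
    have e2: "t # L' = sl (sd (set (t#l')) {i})"
      unfolding e1 L'_def using ltl gt by (subst sl_insert_min) (auto simp: sd_def)
    have e3: "sL E i (set (t#l')) = (E i t \<noteq> sL E i (set l'))"
      unfolding sL_def using ti tnot gt by (simp add: pc_insert) blast
    have e4: "\<sigma> * s' = sgb (sL E i (set (t#l')))"
      unfolding e3 \<sigma>_def s'_def by (simp add: sgb_xor')
    show ?thesis using C e2 e4 by simp
  qed
qed

lemma mon_nf:
  assumes "set w \<subseteq> {1..n}"
  shows "cgr (mon w) (fa_smult (sgb (cb E w)) (mon (sl (Pw w))))"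
  using assms
proof (induction w)
  case Nil
  then show ?case by (simp add: sgb_def smult_one cgr_refl)
next
  case (Cons i w)
  have i: "i \<in> {1..n}" and wr: "set w \<subseteq> {1..n}" using Cons.prems by auto
  let ?c = "sgb (cb E w)"
  have mi: "mon [i] \<in> free_alg n" using i by (intro free_alg_mon) auto
  have PS: "Pw w \<subseteq> {1..n}" using Pw_sub wr by blast
  have s1: "cgr (mon (i#w)) (fa_smult ?c (mon (i # sl (Pw w))))"
    using cgr_lmult[OF mi Cons.IH[OF wr]] by (simp add: mult_mon mult_smult_right)
  have mv: "cgr (mon (i # sl (Pw w))) (fa_smult (sgb (sL E i (Pw w))) (mon (sl (sd (Pw w) {i}))))"
    using moving[of "sl (Pw w)" i] PS i by (simp add: strict_sorted_list_of_set)
  have s2: "cgr (mon (i#w)) (fa_smult (?c * sgb (sL E i (Pw w))) (mon (sl (sd (Pw w) {i}))))"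
    using cgr_trans[OF s1 cgr_smult[OF mv, of ?c]] by (simp add: smult_smult)
  then show ?case by (simp add: Pw_Cons sgb_xor' mult.commute)
qed

definition nf :: "(nat list \<Rightarrow> complex) \<Rightarrow> (nat list \<Rightarrow> complex)" where
  "nf p = (\<lambda>x. \<Sum>T\<in>Pow {1..n}. phi E p T * mon (sl T) x)"

lemma decomp: "finite (supp p) \<Longrightarrow> p = (\<lambda>x. \<Sum>w\<in>supp p. p w * mon w x)"
proof
  fix x assume f: "finite (supp p)"
  have "(\<Sum>w\<in>supp p. p w * mon w x) = (\<Sum>w\<in>supp p. if x = w then p w else 0)"
    by (rule sum.cong) (auto simp: mon_def)
  also have "\<dots> = p x" using f by (simp add: supp_def)
  finally show "p x = (\<Sum>w\<in>supp p. p w * mon w x)" by simp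
qed

lemma cgr_nf:
  assumes p: "p \<in> free_alg n"
  shows "cgr p (nf p)"
proof -
  have f: "finite (supp p)" and r: "rng n p" using p by (auto simp: free_alg_iff)
  define q where "q = (\<lambda>x. \<Sum>w\<in>supp p. p w * (sgb (cb E w) * mon (sl (Pw w)) x))"
  have "fa_sub p q = (\<lambda>x. \<Sum>w\<in>supp p. fa_smult (p w) (fa_sub (mon w) (fa_smult (sgb (cb E w)) (mon (sl (Pw w))))) x)"
    apply (subst decomp[OF f])
    by (simp add: q_def fa_sub_def fa_smult_def sum_subtractf algebra_simps)
  moreover have "\<forall>w\<in>supp p. fa_smult (p w) (fa_sub (mon w) (fa_smult (sgb (cb E w)) (mon (sl (Pw w))))) \<in> I"
    using mon_nf r by (auto simp: rng_def cgr_def intro!: clifford_ideal.smult)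
  ultimately have "cgr p q" unfolding cgr_def using I_sum[OF f] by simp
  moreover have "q = nf p"
  proof
    fix x
    have "nf p x = (\<Sum>T\<in>Pow {1..n}. \<Sum>w\<in>supp p. p w * (Phi E w T * mon (sl T) x))"
      by (simp add: nf_def phi_def sum_distrib_right mult.assoc)
    also have "\<dots> = (\<Sum>w\<in>supp p. \<Sum>T\<in>Pow {1..n}. p w * (Phi E w T * mon (sl T) x))"
      by (rule sum.swap)
    also have "\<dots> = (\<Sum>w\<in>supp p. p w * (sgb (cb E w) * mon (sl (Pw w)) x))"
    proof (rule sum.cong[OF refl])
      fix w assume "w \<in> supp p"
      then have "Pw w \<in> Pow {1..n}" using r Pw_sub by (auto simp: rng_def)
      then show "(\<Sum>T\<in>Pow {1..n}. p w * (Phi E w T * mon (sl T) x)) = p w * (sgb (cb E w) * mon (sl (Pw w)) x)"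
      proof -
        have "(\<Sum>T\<in>Pow {1..n}. p w * (Phi E w T * mon (sl T) x))
            = (\<Sum>T\<in>Pow {1..n}. if Pw w = T then p w * (sgb (cb E w) * mon (sl T) x) else 0)"
          by (rule sum.cong) (auto simp: Phi_def)
        also have "\<dots> = p w * (sgb (cb E w) * mon (sl (Pw w)) x)"
          using \<open>Pw w \<in> Pow {1..n}\<close> by (subst sum.delta') auto
        finally show ?thesis .
      qed
    qed
    finally show "q x = nf p x" by (simp add: q_def)
  qed
  ultimately show ?thesis by simp
qed

lemma phi_zero_ideal:
  assumes p: "p \<in> free_alg n" and z: "\<And>T. phi E p T = 0"
  shows "p \<in> I"
proof -
  have "nf p = fa_zero" by (simp add: nf_def z fa_zero_def)
  then have "fa_sub p fa_zero \<in> I" using cgr_nf[OF p] by (simp add: cgr_def)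
  moreover have "fa_sub p fa_zero = p" by (simp add: fa_sub_def fa_zero_def)
  ultimately show ?thesis by simp
qed

lemma ideal_iff:
  assumes p: "p \<in> free_alg n"
  shows "p \<in> I \<longleftrightarrow> (\<forall>T. phi E p T = 0)"
  using ideal_phi phi_zero_ideal p by metis

end


lemma Pw_sl: "finite S \<Longrightarrow> Pw (sl S) = S"
  by (simp add: Pw_distinct)

lemma cb_sl: "cb E (sl S) = False"
  by (simp add: cb_sorted strict_sorted_list_of_set)

lemma free_alg_lincomb:
  assumes "finite B" "B \<subseteq> free_alg n"
  shows "(\<lambda>w. \<Sum>b\<in>B. c b * b w) \<in> free_alg n"
  using assms
proof (induction B rule: finite_induct)
  case empty
  then show ?case using free_alg_zero by (simp add: fa_zero_def)
next
  case (insert a B)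
  have "(\<lambda>w. \<Sum>b\<in>insert a B. c b * b w) = fa_add (fa_smult (c a) a) (\<lambda>w. \<Sum>b\<in>B. c b * b w)"
    using insert by (simp add: fa_add_def fa_smult_def)
  then show ?case using insert by (auto intro!: free_alg_add free_alg_smult)
qed

lemma phi_lincomb:
  assumes "finite B" "B \<subseteq> free_alg n"
  shows "phi E (\<lambda>w. \<Sum>b\<in>B. c b * b w) T = (\<Sum>b\<in>B. c b * phi E b T)"
  using assms
proof (induction B rule: finite_induct)
  case empty
  then show ?case using phi_zero by (simp add: fa_zero_def)
next
  case (insert a B)
  have eq: "(\<lambda>w. \<Sum>b\<in>insert a B. c b * b w) = fa_add (fa_smult (c a) a) (\<lambda>w. \<Sum>b\<in>B. c b * b w)"
    using insert by (simp add: fa_add_def fa_smult_def)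
  have fa: "a \<in> free_alg n" and fB: "(\<lambda>w. \<Sum>b\<in>B. c b * b w) \<in> free_alg n"
    using insert free_alg_lincomb[of B n c] by auto
  have "phi E (\<lambda>w. \<Sum>b\<in>insert a B. c b * b w) T = c a * phi E a T + phi E (\<lambda>w. \<Sum>b\<in>B. c b * b w) T"
    unfolding eq using fa fB free_alg_smult[OF fa]
    by (simp add: phi_add phi_smult free_alg_iff)
  then show ?case using insert by simp
qed

lemma phi_mon_sl: "finite T \<Longrightarrow> phi E (mon (sl T)) T' = (if T = T' then 1 else 0)"
  by (simp add: phi_mon Phi_def Pw_sl cb_sl sgb_def)

lemma mon_inj: "mon u = mon v \<Longrightarrow> u = v"
  unfolding mon_def by (metis zero_neq_one)

context cg begin

lemma FR_FL:
  assumes S: "S \<in> K" and v: "set v \<subseteq> {1..n}"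
  shows "FR E S v = FL E v S"
proof -
  have Sn: "S \<subseteq> {1..n}" using S by (auto simp: K_def Kset_def)
  have fS: "finite S" using Sn finite_subset by blast
  let ?u = "sl S"
  have u: "set ?u \<subseteq> {1..n}" using Sn fS by simp
  have Pu: "Pw ?u = S" using Pw_sl[OF fS] .
  have "cb E (?u @ v) = cb E (v @ ?u)" using lemB[OF u _ v] Pu S by simp
  moreover have "cb E (?u @ v) = FR E S v" using cb_appR[OF u v] Pu cb_sl by simp
  moreover have "cb E (v @ ?u) = FL E v S" using cb_appL[of E v ?u] Pu cb_sl by simp
  ultimately show ?thesis by simp
qed

lemma phi_supp_sub:
  assumes p: "p \<in> free_alg n" and "phi E p S \<noteq> 0"
  shows "S \<subseteq> {1..n}"
proof -
  have "(\<Sum>w\<in>supp p. p w * Phi E w S) \<noteq> 0" using assms(2) by (simp add: phi_def)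
  then obtain w where w1: "w \<in> supp p" and w2: "p w * Phi E w S \<noteq> 0"
    by (rule sum.not_neutral_contains_not_neutral)
  from w2 have "Phi E w S \<noteq> 0" by simp
  note w = w1 this
  then have "Pw w = S" "set w \<subseteq> {1..n}" using w p by (auto simp: Phi_def free_alg_iff rng_def split: if_splits)
  then show ?thesis using Pw_sub by blast
qed

lemma center_iff:
  assumes p: "p \<in> free_alg n"
  shows "p \<in> center_preimage n E \<longleftrightarrow> (\<forall>T. phi E p T \<noteq> 0 \<longrightarrow> T \<in> K)"
proof
  assume c: "p \<in> center_preimage n E"
  show "\<forall>T. phi E p T \<noteq> 0 \<longrightarrow> T \<in> K"
  proof (intro allI impI)
    fix S assume nz: "phi E p S \<noteq> 0"
    have Sn: "S \<subseteq> {1..n}" using phi_supp_sub[OF p nz] .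
    have fS: "finite S" using Sn finite_subset by blast
    have "\<not> pc S (E i)" if i: "i \<in> {1..n}" for i
    proof -
      have q: "mon [i] \<in> free_alg n" using i by (intro free_alg_mon) auto
      have "fa_sub (fa_mult p (mon [i])) (fa_mult (mon [i]) p) \<in> I"
        using c q by (auto simp: center_preimage_def)
      then have z: "phi E (fa_sub (fa_mult p (mon [i])) (fa_mult (mon [i]) p)) (sd S {i}) = 0"
        using ideal_phi by metis
      have fin: "finite (supp (fa_mult p (mon [i])))" "finite (supp (fa_mult (mon [i]) p))"
        using free_alg_mult[OF p q] free_alg_mult[OF q p] by (auto simp: free_alg_iff)
      have "phi E (fa_mult p (mon [i])) (sd S {i}) = sgb (sR E i S) * phi E p S"
        using phi_multR[OF p q, of "sd S {i}"] by (simp add: supp_mon Pw_Cons) (simp add: mon_def)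
      moreover have "phi E (fa_mult (mon [i]) p) (sd S {i}) = sgb (sL E i S) * phi E p S"
        using phi_multL[OF p q, of "sd S {i}"] by (simp add: supp_mon Pw_Cons) (simp add: mon_def)
      ultimately have "sgb (sR E i S) = sgb (sL E i S)"
        using z nz unfolding phi_sub[OF fin] by simp
      then have "sR E i S = sL E i S" by (simp add: sgb_inj)
      then show ?thesis using sL_sR[OF fS Sn i] by simp
    qed
    then show "S \<in> K" using Sn by (auto simp: K_def Kset_def)
  qed
next
  assume sK: "\<forall>T. phi E p T \<noteq> 0 \<longrightarrow> T \<in> K"
  show "p \<in> center_preimage n E"
    unfolding center_preimage_def
  proof (intro CollectI conjI ballI p)
    fix q assume q: "q \<in> free_alg n"
    have fa: "fa_sub (fa_mult p q) (fa_mult q p) \<in> free_alg n"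
      using free_alg_mult[OF p q] free_alg_mult[OF q p] by (rule free_alg_sub)
    have fin: "finite (supp (fa_mult p q))" "finite (supp (fa_mult q p))"
      using free_alg_mult[OF p q] free_alg_mult[OF q p] by (auto simp: free_alg_iff)
    have "phi E (fa_sub (fa_mult p q) (fa_mult q p)) T = 0" for T
    proof -
      have "phi E (fa_sub (fa_mult p q) (fa_mult q p)) T
          = (\<Sum>v\<in>supp q. q v * sgb (FR E (sd T (Pw v)) v) * phi E p (sd T (Pw v)))
          - (\<Sum>v\<in>supp q. q v * sgb (FL E v (sd T (Pw v))) * phi E p (sd T (Pw v)))"
        unfolding phi_sub[OF fin] phi_multR[OF p q] phi_multL[OF p q] ..
      also have "\<dots> = (\<Sum>v\<in>supp q. q v * (sgb (FR E (sd T (Pw v)) v) - sgb (FL E v (sd T (Pw v)))) * phi E p (sd T (Pw v)))"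
        by (simp add: sum_subtractf[symmetric] algebra_simps)
      also have "\<dots> = 0"
      proof (rule sum.neutral, rule ballI)
        fix v assume v: "v \<in> supp q"
        then have vr: "set v \<subseteq> {1..n}" using q by (auto simp: free_alg_iff rng_def)
        show "q v * (sgb (FR E (sd T (Pw v)) v) - sgb (FL E v (sd T (Pw v)))) * phi E p (sd T (Pw v)) = 0"
        proof (cases "phi E p (sd T (Pw v)) = 0")
          case False
          then have "sd T (Pw v) \<in> K" using sK by blast
          then show ?thesis using FR_FL vr by simp
        qed simp
      qed
      finally show ?thesis .
    qed
    then show "fa_sub (fa_mult p q) (fa_mult q p) \<in> I" using ideal_iff[OF fa] by simp
  qed
qed

definition B0 where "B0 = (\<lambda>T. mon (sl T)) ` K"

lemma finite_K: "finite K"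
proof -
  have "K \<subseteq> Pow {1..n}" by (auto simp: K_def Kset_def)
  then show ?thesis by (meson finite_Pow_iff finite_atLeastAtMost finite_subset)
qed

lemma K_sub: "T \<in> K \<Longrightarrow> T \<subseteq> {1..n}" by (auto simp: K_def Kset_def)
lemma K_fin: "T \<in> K \<Longrightarrow> finite T" using K_sub finite_subset by blast

lemma inj_B0: "inj_on (\<lambda>T. mon (sl T)) K"
proof (rule inj_onI)
  fix S T assume "S \<in> K" "T \<in> K" "mon (sl S) = mon (sl T)"
  then have "sl S = sl T" "finite S" "finite T" using mon_inj K_fin by auto
  then show "S = T" by (metis sorted_list_of_set.set_sorted_key_list_of_set)
qed

lemma mon_sl_free: "T \<in> K \<Longrightarrow> mon (sl T) \<in> free_alg n"
  using K_sub K_fin by (intro free_alg_mon) auto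

lemma mon_sl_center: "T \<in> K \<Longrightarrow> mon (sl T) \<in> center_preimage n E"
  using center_iff[OF mon_sl_free] phi_mon_sl K_fin by (auto split: if_splits)

lemma B0_free: "B0 \<subseteq> free_alg n" using mon_sl_free by (auto simp: B0_def)

lemma phi_lincomb_B0:
  "phi E (lincomb c B0) T = (if T \<in> K then c (mon (sl T)) else 0)"
proof -
  have "phi E (lincomb c B0) T = (\<Sum>b\<in>B0. c b * phi E b T)"
    unfolding lincomb_def using B0_free finite_K by (intro phi_lincomb) (auto simp: B0_def)
  also have "\<dots> = (\<Sum>S\<in>K. c (mon (sl S)) * phi E (mon (sl S)) T)"
    unfolding B0_def by (subst sum.reindex[OF inj_B0]) simp
  also have "\<dots> = (\<Sum>S\<in>K. if S = T then c (mon (sl S)) else 0)"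
    by (rule sum.cong) (auto simp: phi_mon_sl K_fin)
  also have "\<dots> = (if T \<in> K then c (mon (sl T)) else 0)"
    using finite_K by simp
  finally show ?thesis .
qed

lemma B0_basis: "center_basis n E B0"
  unfolding center_basis_def
proof (intro conjI allI impI ballI)
  show "finite B0" using finite_K by (simp add: B0_def)
  show "B0 \<subseteq> center_preimage n E" using mon_sl_center by (auto simp: B0_def)
next
  fix c b assume l: "lincomb c B0 \<in> I" and b: "b \<in> B0"
  then obtain T where T: "T \<in> K" "b = mon (sl T)" by (auto simp: B0_def)
  have "phi E (lincomb c B0) T = 0" using ideal_phi[OF l] by simp
  then show "c b = 0" using T phi_lincomb_B0 by simp
next
  fix p assume pc: "p \<in> center_preimage n E"
  have p: "p \<in> free_alg n" using pc by (simp add: center_preimage_def)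
  have sK: "\<forall>T. phi E p T \<noteq> 0 \<longrightarrow> T \<in> K" using center_iff[OF p] pc by simp
  define c where "c b = phi E p (the_inv_into K (\<lambda>T. mon (sl T)) b)" for b
  have fl: "lincomb c B0 \<in> free_alg n"
    unfolding lincomb_def using B0_free finite_K by (intro free_alg_lincomb) (auto simp: B0_def)
  have fin: "finite (supp p)" "finite (supp (lincomb c B0))" using p fl by (auto simp: free_alg_iff)
  have "phi E (fa_sub p (lincomb c B0)) T = 0" for T
  proof -
    have "phi E (lincomb c B0) T = (if T \<in> K then phi E p T else 0)"
      unfolding phi_lincomb_B0 c_def using the_inv_into_f_f[OF inj_B0] by simp
    then show ?thesis unfolding phi_sub[OF fin] using sK by auto
  qed
  then show "\<exists>c. fa_sub p (lincomb c B0) \<in> I"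
    using ideal_iff[OF free_alg_sub[OF p fl]] by blast
qed

end


lemma sum_fun_apply: "(\<Sum>x\<in>A. f x) T = (\<Sum>x\<in>A. f x T)"
  by (induction A rule: infinite_finite_induct) auto

definition scl :: "complex \<Rightarrow> (nat set \<Rightarrow> complex) \<Rightarrow> (nat set \<Rightarrow> complex)" where
  "scl c f = (\<lambda>T. c * f T)"

lemma vs: "vector_space scl"
  by unfold_locales (auto simp: scl_def fun_eq_iff algebra_simps)

definition Dl :: "nat set \<Rightarrow> nat set \<Rightarrow> complex" where
  "Dl T = (\<lambda>T'. if T = T' then 1 else 0)"

context cg begin

lemma lincomb_I_iff:
  assumes "finite B" "B \<subseteq> free_alg n"
  shows "lincomb c B \<in> I \<longleftrightarrow> (\<forall>T. (\<Sum>b\<in>B. c b * phi E b T) = 0)"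
proof -
  have "lincomb c B \<in> free_alg n" unfolding lincomb_def using assms by (rule free_alg_lincomb)
  then show ?thesis using ideal_iff phi_lincomb[OF assms] by (simp add: lincomb_def)
qed

lemma basis_card:
  assumes B: "center_basis n E B"
  shows "card B = card K"
proof -
  interpret V: vector_space scl by (rule vs)
  have fB: "finite B" and Bc: "B \<subseteq> center_preimage n E"
    and ind: "\<And>c. lincomb c B \<in> I \<Longrightarrow> \<forall>b\<in>B. c b = 0"
    and spn: "\<And>p. p \<in> center_preimage n E \<Longrightarrow> \<exists>c. fa_sub p (lincomb c B) \<in> I"
    using B by (auto simp: center_basis_def)
  have Bf: "B \<subseteq> free_alg n" using Bc by (auto simp: center_preimage_def)
  let ?F = "phi E"
  have inj: "inj_on ?F B"
  proof (rule inj_onI, rule ccontr)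
    fix b1 b2 assume b1: "b1 \<in> B" and b2: "b2 \<in> B" and eq: "?F b1 = ?F b2" and ne: "b1 \<noteq> b2"
    define c where "c b = (if b = b1 then 1 else 0) - (if b = b2 then 1 else (0::complex))" for b
    have "(\<Sum>b\<in>B. c b * phi E b T) = 0" for T
    proof -
      have "(\<Sum>b\<in>B. c b * phi E b T) = (\<Sum>b\<in>B. if b = b1 then phi E b T else 0) - (\<Sum>b\<in>B. if b = b2 then phi E b T else 0)"
        unfolding c_def left_diff_distrib sum_subtractf
        by (intro arg_cong2[where f="(-)"] sum.cong) auto
      also have "\<dots> = 0" using fB b1 b2 eq by simp
      finally show ?thesis .
    qed
    then have "lincomb c B \<in> I" using lincomb_I_iff[OF fB Bf] by simp
    then have "c b1 = 0" using ind b1 by blast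
    then show False using ne by (simp add: c_def)
  qed
  have indF: "V.independent (?F ` B)"
  proof
    assume "V.dependent (?F ` B)"
    then obtain t u v0 where t: "finite t" "t \<subseteq> ?F ` B" and z: "(\<Sum>v\<in>t. scl (u v) v) = 0"
      and v0: "v0 \<in> t" "u v0 \<noteq> 0"
      unfolding V.dependent_explicit by blast
    define c where "c b = (if ?F b \<in> t then u (?F b) else 0)" for b
    have "(\<Sum>b\<in>B. c b * phi E b T) = 0" for T
    proof -
      have "(\<Sum>b\<in>B. c b * phi E b T) = (\<Sum>b\<in>{b\<in>B. ?F b \<in> t}. u (?F b) * phi E b T)"
        unfolding c_def using fB by (intro sum.mono_neutral_cong_right) auto
      also have "\<dots> = (\<Sum>v\<in>?F ` {b\<in>B. ?F b \<in> t}. u v * v T)"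
        by (subst sum.reindex) (auto intro: inj_on_subset[OF inj])
      also have "?F ` {b\<in>B. ?F b \<in> t} = t" using t by auto
      also have "(\<Sum>v\<in>t. u v * v T) = (\<Sum>v\<in>t. scl (u v) v) T"
        by (simp add: sum_fun_apply scl_def)
      finally show ?thesis using z by simp
    qed
    then have "lincomb c B \<in> I" using lincomb_I_iff[OF fB Bf] by simp
    moreover obtain b0 where "b0 \<in> B" "v0 = ?F b0" using v0 t by auto
    ultimately have "c b0 = 0" using ind by blast
    then show False using v0 \<open>v0 = ?F b0\<close> by (simp add: c_def)
  qed
  have injD: "inj_on Dl K"
  proof (rule inj_onI)
    fix S T assume "Dl S = Dl T"
    then have "Dl S S = Dl T S" by simp
    then show "S = T" by (simp add: Dl_def split: if_splits)
  qed
  have indD: "V.independent (Dl ` K)"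
  proof
    assume "V.dependent (Dl ` K)"
    then obtain t u v0 where t: "finite t" "t \<subseteq> Dl ` K" and z: "(\<Sum>v\<in>t. scl (u v) v) = 0"
      and v0: "v0 \<in> t" "u v0 \<noteq> 0"
      unfolding V.dependent_explicit by blast
    obtain T0 where T0: "T0 \<in> K" "v0 = Dl T0" using v0 t by auto
    have "(\<Sum>v\<in>t. scl (u v) v) T0 = (\<Sum>v\<in>t. if v = v0 then u v else 0)"
      unfolding sum_fun_apply
    proof (rule sum.cong[OF refl])
      fix v assume "v \<in> t"
      then obtain S where "S \<in> K" "v = Dl S" using t by auto
      note S = this
      have "(v = v0) = (S = T0)" using S T0 inj_onD[OF injD, of S T0] by auto
      then show "scl (u v) v T0 = (if v = v0 then u v else 0)"
      proof -
        have "scl (u v) v T0 = u v * (if S = T0 then 1 else 0)" by (simp add: scl_def Dl_def S(2))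
        then show ?thesis using \<open>(v = v0) = (S = T0)\<close> by simp
      qed
    qed
    also have "\<dots> = u v0" using t v0 by simp
    finally show False using z v0 by simp
  qed
  have s1: "?F ` B \<subseteq> V.span (Dl ` K)"
  proof
    fix f assume "f \<in> ?F ` B"
    then obtain b where b: "b \<in> B" "f = ?F b" by auto
    have bf: "b \<in> free_alg n" using b Bf by auto
    have sK: "\<forall>T. phi E b T \<noteq> 0 \<longrightarrow> T \<in> K" using center_iff[OF bf] b Bc by auto
    have "f = (\<Sum>T\<in>K. scl (phi E b T) (Dl T))"
    proof
      fix T'
      have "(\<Sum>T\<in>K. scl (phi E b T) (Dl T)) T' = (\<Sum>T\<in>K. if T = T' then phi E b T else 0)"
        unfolding sum_fun_apply by (rule sum.cong) (auto simp: scl_def Dl_def)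
      also have "\<dots> = f T'" using finite_K sK b by auto
      finally show "f T' = (\<Sum>T\<in>K. scl (phi E b T) (Dl T)) T'" by simp
    qed
    also have "\<dots> \<in> V.span (Dl ` K)"
      by (intro V.span_sum V.span_scale V.span_base) auto
    finally show "f \<in> V.span (Dl ` K)" .
  qed
  have s2: "Dl ` K \<subseteq> V.span (?F ` B)"
  proof
    fix f assume "f \<in> Dl ` K"
    then obtain T where T: "T \<in> K" "f = Dl T" by auto
    obtain c where c: "fa_sub (mon (sl T)) (lincomb c B) \<in> I" using spn[OF mon_sl_center[OF T(1)]] by blast
    have fl: "lincomb c B \<in> free_alg n" unfolding lincomb_def using fB Bf by (rule free_alg_lincomb)
    have fin: "finite (supp (mon (sl T)))" "finite (supp (lincomb c B))"
      using fl by (auto simp: free_alg_iff supp_mon)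
    have "f = (\<Sum>b\<in>B. scl (c b) (?F b))"
    proof
      fix T'
      have "phi E (fa_sub (mon (sl T)) (lincomb c B)) T' = 0" using ideal_phi[OF c] by simp
      then have "phi E (mon (sl T)) T' = phi E (lincomb c B) T'" unfolding phi_sub[OF fin] by simp
      then show "f T' = (\<Sum>b\<in>B. scl (c b) (?F b)) T'"
        using T phi_mon_sl[OF K_fin[OF T(1)]] phi_lincomb[OF fB Bf]
        by (simp add: Dl_def sum_fun_apply scl_def lincomb_def)
    qed
    also have "\<dots> \<in> V.span (?F ` B)"
      by (intro V.span_sum V.span_scale V.span_base) auto
    finally show "f \<in> V.span (?F ` B)" .
  qed
  have "card (?F ` B) \<le> card (Dl ` K)"
    using V.independent_span_bound[OF _ indF s1] finite_K by simp
  moreover have "card (Dl ` K) \<le> card (?F ` B)"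
    using V.independent_span_bound[OF _ indD s2] fB by simp
  ultimately show ?thesis using card_image[OF inj] card_image[OF injD] by simp
qed

lemma center_dim_eq: "center_dim n E = card K"
  unfolding center_dim_def
proof (rule the_equality)
  show "\<exists>B. center_basis n E B \<and> card B = card K"
    using B0_basis basis_card by blast
  show "\<And>d. \<exists>B. center_basis n E B \<and> card B = d \<Longrightarrow> d = card K"
    using basis_card by blast
qed

end


lemma Gkm_simple: "simple_graph n (Gkm_edges k)"
  by (auto simp: simple_graph_def Gkm_edges_def)

lemma Gkm_big: "2 * k < i \<Longrightarrow> \<not> Gkm_edges k i t" by (auto simp: Gkm_edges_def)
lemma Gkm_big2: "2 * k < t \<Longrightarrow> \<not> Gkm_edges k i t" by (auto simp: Gkm_edges_def)

definition pt :: "nat \<Rightarrow> nat" where "pt i = (if odd i then i + 1 else i - 1)"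

lemma pt_pt: "1 \<le> i \<Longrightarrow> pt (pt i) = i"
  unfolding pt_def by (cases "odd i") auto

lemma dv: "((t::nat) + 1) div 2 = a + 1 \<longleftrightarrow> t = 2 * a + 1 \<or> t = 2 * a + 2"
  by presburger

lemma odd_le: "odd (i::nat) \<Longrightarrow> i \<le> 2 * k \<Longrightarrow> i + 1 \<le> 2 * k"
  by presburger

lemma pt_range: "1 \<le> i \<Longrightarrow> i \<le> 2 * k \<Longrightarrow> 1 \<le> pt i \<and> pt i \<le> 2 * k"
  unfolding pt_def using odd_le[of i k] by (cases "odd i") auto

lemma Gkm_pt: "1 \<le> i \<Longrightarrow> i \<le> 2 * k \<Longrightarrow> Gkm_edges k i t \<longleftrightarrow> t = pt i"
proof -
  assume i: "1 \<le> i" "i \<le> 2 * k"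
  show ?thesis
  proof (cases "odd i")
    case True
    then obtain a where a: "i = 2 * a + 1" by (auto elim: oddE)
    have d: "(i + 1) div 2 = a + 1" using a by simp
    have le: "2 * a + 2 \<le> 2 * k" using odd_le[OF True i(2)] a by simp
    have "t = pt i \<longleftrightarrow> t = 2 * a + 2" using True a by (simp add: pt_def)
    moreover have "Gkm_edges k i t \<longleftrightarrow> t = 2 * a + 2"
      unfolding Gkm_edges_def d dv using i a le by auto
    ultimately show ?thesis by simp
  next
    case False
    then obtain b where b: "i = 2 * b" by (auto elim: evenE)
    then obtain a where a: "b = a + 1" using i by (cases b) auto
    have d: "(i + 1) div 2 = a + 1" using a b by simp
    have "t = pt i \<longleftrightarrow> t = 2 * a + 1" using False a b by (simp add: pt_def)
    moreover have "Gkm_edges k i t \<longleftrightarrow> t = 2 * a + 1"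
      unfolding Gkm_edges_def d dv using i a b by auto
    ultimately show ?thesis by simp
  qed
qed

lemma Kset_Gkm:
  assumes "2 * k \<le> n"
  shows "Kset {1..n} (Gkm_edges k) = Pow {2*k+1..n}"
proof
  show "Kset {1..n} (Gkm_edges k) \<subseteq> Pow {2*k+1..n}"
  proof
    fix T assume T: "T \<in> Kset {1..n} (Gkm_edges k)"
    have TV: "T \<subseteq> {1..n}" using T by (auto simp: Kset_def)
    have "t \<in> {2*k+1..n}" if t: "t \<in> T" for t
    proof (rule ccontr)
      assume "t \<notin> {2*k+1..n}"
      then have t1: "1 \<le> t" "t \<le> 2 * k" using t TV by auto
      define i where "i = pt t"
      have i: "1 \<le> i" "i \<le> 2 * k" using pt_range[OF t1] by (auto simp: i_def)
      have "{s\<in>T. Gkm_edges k i s} = {t}"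
        using Gkm_pt[OF i] pt_pt[OF t1(1)] t by (auto simp: i_def)
      then have "pc T (Gkm_edges k i)" by (simp add: pc_def)
      moreover have "i \<in> {1..n}" using i assms by auto
      ultimately show False using T by (auto simp: Kset_def)
    qed
    then show "T \<in> Pow {2*k+1..n}" by auto
  qed
next
  show "Pow {2*k+1..n} \<subseteq> Kset {1..n} (Gkm_edges k)"
  proof
    fix T assume "T \<in> Pow {2*k+1..n}"
    then have T: "T \<subseteq> {2*k+1..n}" by auto
    have "\<not> pc T (Gkm_edges k i)" for i
    proof -
      have "pc T (Gkm_edges k i) = False"
        by (rule pc_false) (use T Gkm_big2 in fastforce)
      then show ?thesis by simp
    qed
    then show "T \<in> Kset {1..n} (Gkm_edges k)" using T by (auto simp: Kset_def)
  qed
qed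

lemma center_dim_Gkm:
  assumes "2 * k \<le> n"
  shows "center_dim n (Gkm_edges k) = 2 ^ (n - 2 * k)"
proof -
  interpret G: cg n "Gkm_edges k" by unfold_locales (rule Gkm_simple)
  have "center_dim n (Gkm_edges k) = card (Kset {1..n} (Gkm_edges k))"
    using G.center_dim_eq by (simp add: G.K_def)
  also have "\<dots> = 2 ^ (n - 2 * k)" by (subst Kset_Gkm[OF assms]) (simp add: card_Pow)
  finally show ?thesis .
qed

theorem mainTheorem3:
  fixes n :: nat and E :: "nat \<Rightarrow> nat \<Rightarrow> bool"
  assumes "n \<ge> 1" and "simple_graph n E"
  shows "\<exists>!km :: nat \<times> nat. 2 * fst km + snd km = n \<and>
           same_clifford_class n (Gkm_edges (fst km)) E"
proof -
  interpret A: cg n E using assms(2) by unfold_locales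
  have si: "symirr {1..n} E" using assms(2) by (auto simp: symirr_def simple_graph_def)
  obtain r where r: "2 * r \<le> n" "card (Kset {1..n} E) = 2 ^ (n - 2 * r)"
    using Kset_count[OF _ si] by auto
  have dE: "center_dim n E = 2 ^ (n - 2 * r)" using A.center_dim_eq r by (simp add: A.K_def)
  show ?thesis
  proof (rule ex1I[of _ "(r, n - 2 * r)"])
    show "2 * fst (r, n - 2 * r) + snd (r, n - 2 * r) = n \<and>
          same_clifford_class n (Gkm_edges (fst (r, n - 2 * r))) E"
      using r dE center_dim_Gkm[OF r(1)] by (simp add: same_clifford_class_def)
  next
    fix km :: "nat \<times> nat"
    assume h: "2 * fst km + snd km = n \<and> same_clifford_class n (Gkm_edges (fst km)) E"
    then have k: "2 * fst km \<le> n" by auto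
    have "(2::nat) ^ (n - 2 * fst km) = 2 ^ (n - 2 * r)"
      using h center_dim_Gkm[OF k] dE by (simp add: same_clifford_class_def)
    then have "n - 2 * fst km = n - 2 * r" by simp
    then have "fst km = r" using k r(1) by linarith
    then show "km = (r, n - 2 * r)" using h by (cases km) auto
  qed
qed


end
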